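(* Let $G$ and $\ell$ be as in the construction described in the context. If $G$ has an acyclic matching of size at least $\ell$, then for some $q\in[t]$ the instance $(X,\mathcal{S}_q)$ of \textsc{Exact-3-Cover} is a Yes-instance.
   Context: Construction. Let $n=3c$ with $c\in\mathbb{N}$, $X=[n]$, and let $(X,\mathcal{S}_1),\dots,(X,\mathcal{S}_t)$ be instances of \textsc{Exact-3-Cover} (each $\mathcal{S}_i$ a collection of 3-element subsets of $X$, all $\mathcal{S}_i$ of the same size $m$ and pairwise distinct as collections). An instance $(X,\mathcal{S})$ is a Yes-instance if some subcollection of $\mathcal{S}$ covers every element of $X$ exactly once. Let $\mathcal{C}=\bigcup_{i\in[t]}\mathcal{S}_i=\{s_1,\dots,s_{|\mathcal{C}|}\}$ (distinct 3-sets). The graph $G$: a vertex set $X'=\{v_a:a\in X\}$; for each $s_j=\{a,b,c\}\in\mathcal{C}$ a set gadget $Q_j$ with vertices $u_{ja},u_{jb},u_{jc}$ (interface vertices), $u_j,w_j,u_j',w_j'$, where each of $u_j,w_j$ is adjacent to each of $u_{ja},u_{jb},u_{jc}$, and additionally $u_jw_j,u_ju_j',w_jw_j'$ are edges; for each $s_j\in\mathcal{C}$ and $d\in s_j$ the edge $u_{jd}v_d$ (cross edges); a vertex $p$ and vertices $P=\{p_1,\dots,p_t\}$ with edges $pp_i$ for all $i$; and for each $i\in[t]$ and each $s_j\in\mathcal{C}\setminus\mathcal{S}_i$, edges from $p_i$ to the three interface vertices of $Q_j$. There are no other edges. Set $\ell=2|\mathcal{C}|+\frac{2n}{3}+1$.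 A matching $M$ is acyclic if the subgraph induced by the endpoints of its edges is a forest. *)

theory Defs
  imports Main
begin

text \<open>Vertices of the constructed graph G. Set gadgets are indexed by the
3-set s itself (an element of C), which is equivalent to indexing by j.\<close>
datatype vtx =
    Xv nat
  | Iv "nat set" nat       (* interface vertex u_{j a} of gadget Q_j, s_j = s *)
  | Uv "nat set"
  | Wv "nat set"
  | U'v "nat set"
  | W'v "nat set"
  | Pv
  | Piv nat

definition ground :: "nat \<Rightarrow> nat set" where
  "ground c = {1..3*c}"

definition unionC :: "nat \<Rightarrow> (nat \<Rightarrow> nat set set) \<Rightarrow> nat set set" where
  "unionC t S = (\<Union>i\<in>{1..t}. S i)"

definition G_edges :: "nat \<Rightarrow> (nat \<Rightarrow> nat set set) \<Rightarrow> vtx set set" where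
  "G_edges t S =
     (\<Union>s\<in>unionC t S. \<Union>a\<in>s. {{Iv s a, Uv s}, {Iv s a, Wv s}})
   \<union> (\<Union>s\<in>unionC t S. {{Uv s, Wv s}, {Uv s, U'v s}, {Wv s, W'v s}})
   \<union> (\<Union>s\<in>unionC t S. \<Union>a\<in>s. {{Iv s a, Xv a}})
   \<union> (\<Union>i\<in>{1..t}. {{Pv, Piv i}})
   \<union> (\<Union>i\<in>{1..t}. \<Union>s\<in>unionC t S - S i. \<Union>a\<in>s. {{Piv i, Iv s a}})"

definition is_matching :: "'a set set \<Rightarrow> 'a set set \<Rightarrow> bool" where
  "is_matching E M \<longleftrightarrow> M \<subseteq> E \<and> (\<forall>e\<in>M. \<forall>f\<in>M. e \<noteq> f \<longrightarrow> e \<inter> f = {})"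

definition has_cycle :: "'a set set \<Rightarrow> bool" where
  "has_cycle E \<longleftrightarrow> (\<exists>vs. length vs \<ge> 3 \<and> distinct vs \<and>
      (\<forall>i<length vs. {vs ! i, vs ! ((i + 1) mod length vs)} \<in> E))"

definition induced_edges :: "'a set set \<Rightarrow> 'a set \<Rightarrow> 'a set set" where
  "induced_edges E U = {e \<in> E. e \<subseteq> U}"

definition acyclic_matching :: "'a set set \<Rightarrow> 'a set set \<Rightarrow> bool" where
  "acyclic_matching E M \<longleftrightarrow> is_matching E M \<and> \<not> has_cycle (induced_edges E (\<Union>M))"

definition x3c_yes :: "nat set \<Rightarrow> nat set set \<Rightarrow> bool" where
  "x3c_yes X S \<longleftrightarrow> (\<exists>T\<subseteq>S. \<forall>a\<in>X. \<exists>!s. s \<in> T \<and> a \<in> s)"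

end

theory Submission imports Defs begin
lemma cyc3: "distinct [a,b,c] \<Longrightarrow> {a,b}\<in>F \<Longrightarrow> {b,c}\<in>F \<Longrightarrow> {c,a}\<in>F \<Longrightarrow> has_cycle F"
  unfolding has_cycle_def
proof (intro exI[of _ "[a,b,c]"] conjI allI impI)
  fix i assume d: "distinct [a,b,c]" "{a,b}\<in>F" "{b,c}\<in>F" "{c,a}\<in>F" and i: "i < length [a,b,c]"
  then have "i=0 \<or> i=1 \<or> i=2" by auto
  then show "{[a,b,c] ! i, [a,b,c] ! ((i + 1) mod length [a,b,c])} \<in> F" using d by (elim disjE) simp_all
qed simp_all
lemma cyc4: "distinct [a,b,c,d] \<Longrightarrow> {a,b}\<in>F \<Longrightarrow> {b,c}\<in>F \<Longrightarrow> {c,d}\<in>F \<Longrightarrow> {d,a}\<in>F \<Longrightarrow> has_cycle F"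
  unfolding has_cycle_def
proof (intro exI[of _ "[a,b,c,d]"] conjI allI impI)
  fix i assume d: "distinct [a,b,c,d]" "{a,b}\<in>F" "{b,c}\<in>F" "{c,d}\<in>F" "{d,a}\<in>F" and i: "i < length [a,b,c,d]"
  then have "i=0 \<or> i=1 \<or> i=2 \<or> i=3" by auto
  then show "{[a,b,c,d] ! i, [a,b,c,d] ! ((i + 1) mod length [a,b,c,d])} \<in> F" using d by (elim disjE) simp_all
qed simp_all

lemma ind: "e \<in> E \<Longrightarrow> e \<subseteq> U \<Longrightarrow> e \<in> induced_edges E U"
  by (simp add: induced_edges_def)

lemma E_IU: "s \<in> unionC t S \<Longrightarrow> a \<in> s \<Longrightarrow> {Iv s a, Uv s} \<in> G_edges t S"
  unfolding G_edges_def by blast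
lemma E_IW: "s \<in> unionC t S \<Longrightarrow> a \<in> s \<Longrightarrow> {Iv s a, Wv s} \<in> G_edges t S"
  unfolding G_edges_def by blast
lemma E_UW: "s \<in> unionC t S \<Longrightarrow> {Uv s, Wv s} \<in> G_edges t S"
  unfolding G_edges_def by blast
lemma E_PI: "i \<in> {1..t} \<Longrightarrow> s \<in> unionC t S \<Longrightarrow> s \<notin> S i \<Longrightarrow> a \<in> s \<Longrightarrow> {Piv i, Iv s a} \<in> G_edges t S"
  unfolding G_edges_def by (intro UnI2) blast

lemma I_X: "{Iv s a, Xv a} \<in> G_edges t S \<Longrightarrow> s \<in> unionC t S \<and> a \<in> s"
  unfolding G_edges_def by (auto simp: doubleton_eq_iff)
lemma I_P: "{Piv i, Iv s a} \<in> G_edges t S \<Longrightarrow> i \<in> {1..t} \<and> s \<in> unionC t S \<and> s \<notin> S i \<and> a \<in> s"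
  unfolding G_edges_def by (auto simp: doubleton_eq_iff)
lemma I_Pv: "e \<in> G_edges t S \<Longrightarrow> Pv \<in> e \<Longrightarrow> \<exists>i\<in>{1..t}. e = {Pv, Piv i}"
  unfolding G_edges_def by auto
lemma I_cases: "e \<in> G_edges t S \<Longrightarrow> Pv \<in> e \<or> (\<exists>s\<in>unionC t S. Uv s \<in> e \<or> Wv s \<in> e \<or> (\<exists>a. e = {Iv s a, Xv a}) \<or> (\<exists>i a. e = {Piv i, Iv s a}))"
  unfolding G_edges_def by auto

lemma match_eq: "is_matching E M \<Longrightarrow> e \<in> M \<Longrightarrow> f \<in> M \<Longrightarrow> v \<in> e \<Longrightarrow> v \<in> f \<Longrightarrow> e = f"
  unfolding is_matching_def by blast

lemma card_EU: "is_matching E M \<Longrightarrow> card {e\<in>M. v \<in> e} \<le> 1"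
proof (cases "finite {e\<in>M. v \<in> e}")
  case True
  assume m: "is_matching E M"
  show ?thesis using card_le_Suc0_iff_eq[OF True] match_eq[OF m] by auto
qed simp

lemma card_EU_pos: "1 \<le> card {e\<in>M. v \<in> e} \<Longrightarrow> v \<in> \<Union>M"
  by (metis (no_types, lifting) Collect_empty_eq One_nat_def UnionI card.empty not_less_eq_eq zero_le)

lemma arith_gadget: fixes m u w x y :: nat
  assumes "m \<le> u+w+x+y" "x+y \<le> 3" "u\<le>1" "w\<le>1" "y\<le>1" "u=1 \<and> w=1 \<longrightarrow> x=0 \<and> y=0"
    "y=1 \<and> (u=1\<or>w=1) \<longrightarrow> x=0"
  shows "3*m \<le> 6+2*x \<and> (3*m = 6+2*x \<longrightarrow> x=0 \<or> (x=3 \<and> (u=1\<or>w=1)))"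
proof -
  have "u=0 \<or> u=1" "w=0 \<or> w=1" "y=0 \<or> y=1" using assms by auto
  then show ?thesis using assms by (elim disjE) simp_all
qed

definition XS where "XS M s = {a. {Iv s a, Xv a} \<in> M}"
definition EXs where "EXs M s = {e\<in>M. \<exists>a. e = {Iv s a, Xv a}}"
definition EP where "EP M s = {e\<in>M. \<exists>i a. e = {Piv i, Iv s a}}"
definition Ms where "Ms M s = {e\<in>M. Uv s \<in> e} \<union> {e\<in>M. Wv s \<in> e} \<union> EXs M s \<union> EP M s"

lemma gadget:
  assumes am: "acyclic_matching (G_edges t S) M" and sC: "s \<in> unionC t S" and cs: "card s = 3" and fM: "finite M"
  shows "3 * card (Ms M s) \<le> 6 + 2 * card (XS M s) \<and>
    (3 * card (Ms M s) = 6 + 2 * card (XS M s) \<longrightarrow>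
       card (XS M s) = 0 \<or> (card (XS M s) = 3 \<and> (Uv s \<in> \<Union>M \<or> Wv s \<in> \<Union>M)))"
proof -
  let ?E = "G_edges t S"
  let ?V = "\<Union>M"
  have mt: "is_matching ?E M" and nc: "\<not> has_cycle (induced_edges ?E ?V)"
    using am by (auto simp: acyclic_matching_def)
  have ME: "M \<subseteq> ?E" using mt by (simp add: is_matching_def)
  have fs: "finite s" using cs by (metis card.infinite zero_neq_numeral)
  define u where "u = card {e\<in>M. Uv s \<in> e}"
  define w where "w = card {e\<in>M. Wv s \<in> e}"
  define x where "x = card (XS M s)"
  define y where "y = card (EP M s)"
  have u1: "u \<le> 1" unfolding u_def by (rule card_EU[OF mt])
  have w1: "w \<le> 1" unfolding w_def by (rule card_EU[OF mt])
  have uV: "u = 1 \<Longrightarrow> Uv s \<in> ?V" unfolding u_def by (rule card_EU_pos) simp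
  have wV: "w = 1 \<Longrightarrow> Wv s \<in> ?V" unfolding w_def by (rule card_EU_pos) simp
  have XSs: "XS M s \<subseteq> s" using ME I_X unfolding XS_def by blast
  have fX: "finite (XS M s)" using XSs fs finite_subset by blast
  have EXimg: "EXs M s = (\<lambda>a. {Iv s a, Xv a}) ` XS M s" unfolding EXs_def XS_def by auto
  have cEX: "card (EXs M s) \<le> x" unfolding EXimg x_def by (rule card_image_le[OF fX])
  have EPE: "\<And>e. e \<in> EP M s \<Longrightarrow> \<exists>i a. e = {Piv i, Iv s a} \<and> e \<in> M \<and> i \<in> {1..t} \<and> s \<notin> S i \<and> a \<in> s"
    unfolding EP_def using ME I_P by blast
  have EP1: "e = f" if e: "e \<in> EP M s" and f: "f \<in> EP M s" for e f
  proof (rule ccontr)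
    assume ne: "e \<noteq> f"
    obtain i a where ei: "e = {Piv i, Iv s a}" "e \<in> M" "i \<in> {1..t}" "s \<notin> S i" "a \<in> s" using EPE[OF e] by blast
    obtain j b where fj: "f = {Piv j, Iv s b}" "f \<in> M" "j \<in> {1..t}" "s \<notin> S j" "b \<in> s" using EPE[OF f] by blast
    have ab: "a \<noteq> b" using match_eq[OF mt ei(2) fj(2), of "Iv s a"] ei fj ne by auto
    have ij: "i \<noteq> j" using match_eq[OF mt ei(2) fj(2), of "Piv i"] ei fj ne by auto
    have "has_cycle (induced_edges ?E ?V)"
    proof (rule cyc4[of "Iv s a" "Piv i" "Iv s b" "Piv j"])
      show "distinct [Iv s a, Piv i, Iv s b, Piv j]" using ab ij by auto
      show "{Iv s a, Piv i} \<in> induced_edges ?E ?V" using ei ME by (intro ind) (auto simp: insert_commute)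
      show "{Piv i, Iv s b} \<in> induced_edges ?E ?V" using ei fj ME sC by (intro ind E_PI) auto
      show "{Iv s b, Piv j} \<in> induced_edges ?E ?V" using fj ME by (intro ind) (auto simp: insert_commute)
      show "{Piv j, Iv s a} \<in> induced_edges ?E ?V" using ei fj ME sC by (intro ind E_PI) auto
    qed
    with nc show False by simp
  qed
  have fEP: "finite (EP M s)" using fM unfolding EP_def by simp
  have y1: "y \<le> 1" unfolding y_def using card_le_Suc0_iff_eq[OF fEP] EP1 by auto
  \<comment> \<open>interface of a P-edge is not in XS\<close>
  have xy: "x + y \<le> 3"
  proof (cases "y = 0")
    case True
    then show ?thesis using card_mono[OF fs XSs] cs x_def by simp
  next
    case False
    then obtain e where e: "e \<in> EP M s" unfolding y_def by (metis card.empty equals0I)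
    obtain i a where ei: "e = {Piv i, Iv s a}" "e \<in> M" "i \<in> {1..t}" "s \<notin> S i" "a \<in> s" using EPE[OF e] by blast
    have "a \<notin> XS M s"
    proof
      assume "a \<in> XS M s"
      hence "{Iv s a, Xv a} \<in> M" by (simp add: XS_def)
      from match_eq[OF mt ei(2) this, of "Iv s a"] ei show False by (auto simp: doubleton_eq_iff)
    qed
    hence "XS M s \<subseteq> s - {a}" using XSs by blast
    hence "x \<le> card (s - {a})" unfolding x_def by (intro card_mono) (use fs in auto)
    also have "\<dots> = 2" using cs ei(5) fs by simp
    finally show ?thesis using y1 by simp
  qed
  have tri: "False" if "Uv s \<in> ?V" "Wv s \<in> ?V" "Iv s a \<in> ?V" "a \<in> s" for a
  proof -
    have "has_cycle (induced_edges ?E ?V)"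
    proof (rule cyc3[of "Iv s a" "Uv s" "Wv s"])
      show "distinct [Iv s a, Uv s, Wv s]" by auto
      show "{Iv s a, Uv s} \<in> induced_edges ?E ?V" using that sC by (intro ind E_IU) auto
      show "{Uv s, Wv s} \<in> induced_edges ?E ?V" using that sC by (intro ind E_UW) auto
      show "{Wv s, Iv s a} \<in> induced_edges ?E ?V" using that sC E_IW[OF sC \<open>a \<in> s\<close>]
        by (intro ind) (auto simp: insert_commute)
    qed
    with nc show False by simp
  qed
  have c_uw: "x = 0 \<and> y = 0" if "u = 1" "w = 1"
  proof -
    have "XS M s = {}"
    proof (rule ccontr)
      assume "XS M s \<noteq> {}"
      then obtain a where "a \<in> XS M s" by blast
      hence "{Iv s a, Xv a} \<in> M" "a \<in> s" using XSs by (auto simp: XS_def)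
      thus False using tri[of a] uV wV that by blast
    qed
    moreover have "EP M s = {}"
    proof (rule ccontr)
      assume "EP M s \<noteq> {}"
      then obtain e where e: "e \<in> EP M s" by blast
      obtain i a where ei: "e = {Piv i, Iv s a}" "e \<in> M" "i \<in> {1..t}" "s \<notin> S i" "a \<in> s" using EPE[OF e] by blast
      thus False using tri[of a] uV wV that by blast
    qed
    ultimately show ?thesis unfolding x_def y_def by simp
  qed
  have c_py: "x = 0" if yy: "y = 1" and zz: "Uv s \<in> ?V \<or> Wv s \<in> ?V"
  proof (rule ccontr)
    assume "x \<noteq> 0"
    then obtain b where b: "b \<in> XS M s" unfolding x_def by (metis card.empty equals0I)
    hence bM: "{Iv s b, Xv b} \<in> M" and bs: "b \<in> s" using XSs by (auto simp: XS_def)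
    obtain e where e: "e \<in> EP M s" using yy unfolding y_def by (metis card.empty equals0I zero_neq_one)
    obtain i a where ei: "e = {Piv i, Iv s a}" "e \<in> M" "i \<in> {1..t}" "s \<notin> S i" "a \<in> s" using EPE[OF e] by blast
    have ab: "a \<noteq> b"
    proof
      assume "a = b"
      from match_eq[OF mt ei(2) bM, of "Iv s a"] ei \<open>a = b\<close> show False by (auto simp: doubleton_eq_iff)
    qed
    obtain z where z: "z = Uv s \<or> z = Wv s" "z \<in> ?V" using zz by blast
    have zE: "{Iv s b, z} \<in> ?E" "{z, Iv s a} \<in> ?E"
      using z(1) E_IU[OF sC bs] E_IW[OF sC bs] E_IU[OF sC ei(5)] E_IW[OF sC ei(5)]
      by (auto simp: insert_commute)
    have "has_cycle (induced_edges ?E ?V)"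
    proof (rule cyc4[of "Iv s a" "Piv i" "Iv s b" z])
      show "distinct [Iv s a, Piv i, Iv s b, z]" using ab z(1) by auto
      show "{Iv s a, Piv i} \<in> induced_edges ?E ?V" using ei ME by (intro ind) (auto simp: insert_commute)
      show "{Piv i, Iv s b} \<in> induced_edges ?E ?V" using ei bM bs ME sC by (intro ind E_PI) auto
      show "{Iv s b, z} \<in> induced_edges ?E ?V" using zE z bM by (intro ind) auto
      show "{z, Iv s a} \<in> induced_edges ?E ?V" using zE z ei by (intro ind) auto
    qed
    with nc show False by simp
  qed
  have fin: "finite {e\<in>M. Uv s \<in> e}" "finite {e\<in>M. Wv s \<in> e}"
    using fM by simp_all
  have cM: "card (Ms M s) \<le> u + w + x + y"
  proof -
    have 1: "card (Ms M s) \<le> card ({e\<in>M. Uv s \<in> e} \<union> {e\<in>M. Wv s \<in> e} \<union> EXs M s) + card (EP M s)"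
      unfolding Ms_def by (rule card_Un_le)
    have 2: "card ({e\<in>M. Uv s \<in> e} \<union> {e\<in>M. Wv s \<in> e} \<union> EXs M s) \<le> card ({e\<in>M. Uv s \<in> e} \<union> {e\<in>M. Wv s \<in> e}) + card (EXs M s)"
      by (rule card_Un_le)
    have 3: "card ({e\<in>M. Uv s \<in> e} \<union> {e\<in>M. Wv s \<in> e}) \<le> u + w"
      unfolding u_def w_def by (rule card_Un_le)
    show ?thesis using 1 2 3 cEX y_def by linarith
  qed
  have A: "u = 1 \<and> w = 1 \<longrightarrow> x = 0 \<and> y = 0" using c_uw by blast
  have B: "y = 1 \<and> (u = 1 \<or> w = 1) \<longrightarrow> x = 0" using c_py uV wV by blast
  have key: "3 * card (Ms M s) \<le> 6 + 2 * x \<and> (3 * card (Ms M s) = 6 + 2 * x \<longrightarrow> x = 0 \<or> (x = 3 \<and> (u = 1 \<or> w = 1)))"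
    using arith_gadget[OF cM xy u1 w1 y1 A B] .
  show ?thesis
  proof (intro conjI impI)
    show "3 * card (Ms M s) \<le> 6 + 2 * card (XS M s)" using key by (simp add: x_def)
    assume eq: "3 * card (Ms M s) = 6 + 2 * card (XS M s)"
    have "x = 0 \<or> (x = 3 \<and> (u = 1 \<or> w = 1))" using key eq by (simp add: x_def)
    then show "card (XS M s) = 0 \<or> (card (XS M s) = 3 \<and> (Uv s \<in> \<Union>M \<or> Wv s \<in> \<Union>M))"
      unfolding x_def[symmetric] using uV wV by blast
  qed
qed


theorem lemma16:
  fixes c t m :: nat and S :: "nat \<Rightarrow> nat set set"
  assumes three_sets: "\<forall>i\<in>{1..t}. \<forall>s\<in>S i. s \<subseteq> ground c \<and> card s = 3"
    and same_size: "\<forall>i\<in>{1..t}. card (S i) = m"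
    and distinct_inst: "\<forall>i\<in>{1..t}. \<forall>j\<in>{1..t}. i \<noteq> j \<longrightarrow> S i \<noteq> S j"
    and M: "acyclic_matching (G_edges t S) M"
    and size: "card M \<ge> 2 * card (unionC t S) + 2 * c + 1"
  shows "\<exists>q\<in>{1..t}. x3c_yes (ground c) (S q)"
proof -
  let ?E = "G_edges t S"
  let ?C = "unionC t S"
  let ?V = "\<Union>M"
  have mt: "is_matching ?E M" and nc: "\<not> has_cycle (induced_edges ?E ?V)"
    using M by (auto simp: acyclic_matching_def)
  have ME: "M \<subseteq> ?E" using mt by (simp add: is_matching_def)
  have Cg: "\<And>s. s \<in> ?C \<Longrightarrow> s \<subseteq> ground c \<and> card s = 3"
    using three_sets unfolding unionC_def by blast
  have fs: "\<And>s. s \<in> ?C \<Longrightarrow> finite s" using Cg by (metis card.infinite zero_neq_numeral)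
  have fg: "finite (ground c)" by (simp add: ground_def)
  have cg: "card (ground c) = 3 * c" by (simp add: ground_def)
  have fC: "finite ?C"
  proof (rule finite_subset)
    show "?C \<subseteq> Pow (ground c)" using Cg by blast
  qed (use fg in simp)
  have fE: "finite ?E"
    unfolding G_edges_def using fC fs
    by (intro finite_UnI finite_UN_I) (auto intro!: finite_UN_I)
  have fM: "finite M" using fE ME finite_subset by blast
  let ?Mp = "{e\<in>M. Pv \<in> e}"
  have cover: "M \<subseteq> ?Mp \<union> (\<Union>s\<in>?C. Ms M s)"
  proof
    fix e assume e: "e \<in> M"
    then have "e \<in> ?E" using ME by blast
    from I_cases[OF this] e show "e \<in> ?Mp \<union> (\<Union>s\<in>?C. Ms M s)"
      unfolding Ms_def EXs_def EP_def by blast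
  qed
  have cM1: "card M \<le> card ?Mp + (\<Sum>s\<in>?C. card (Ms M s))"
  proof -
    have "card M \<le> card (?Mp \<union> (\<Union>s\<in>?C. Ms M s))"
      by (rule card_mono[OF _ cover], rule finite_subset[OF _ fM]) (auto simp: Ms_def EXs_def EP_def)
    also have "\<dots> \<le> card ?Mp + card (\<Union>s\<in>?C. Ms M s)" by (rule card_Un_le)
    also have "card (\<Union>s\<in>?C. Ms M s) \<le> (\<Sum>s\<in>?C. card (Ms M s))" by (rule card_UN_le[OF fC])
    finally show ?thesis by simp
  qed
  have cMp: "card ?Mp \<le> 1" by (rule card_EU[OF mt])
  have gad: "\<And>s. s \<in> ?C \<Longrightarrow> 3 * card (Ms M s) \<le> 6 + 2 * card (XS M s) \<and>
    (3 * card (Ms M s) = 6 + 2 * card (XS M s) \<longrightarrow>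
       card (XS M s) = 0 \<or> (card (XS M s) = 3 \<and> (Uv s \<in> ?V \<or> Wv s \<in> ?V)))"
    using gadget[OF M _ _ fM] Cg by blast
  have XSs: "\<And>s. XS M s \<subseteq> s" using ME I_X unfolding XS_def by blast
  have XSC: "\<And>s a. a \<in> XS M s \<Longrightarrow> s \<in> ?C" using ME I_X unfolding XS_def by blast
  have disj: "\<And>s s' a. a \<in> XS M s \<Longrightarrow> a \<in> XS M s' \<Longrightarrow> s = s'"
  proof -
    fix s s' a assume "a \<in> XS M s" "a \<in> XS M s'"
    hence e: "{Iv s a, Xv a} \<in> M" "{Iv s' a, Xv a} \<in> M" by (auto simp: XS_def)
    from match_eq[OF mt e, of "Xv a"] show "s = s'" by (auto simp: doubleton_eq_iff)
  qed
  have sumX: "(\<Sum>s\<in>?C. card (XS M s)) = card (\<Union>s\<in>?C. XS M s)"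
  proof (rule card_UN_disjoint[OF fC, symmetric])
    show "\<forall>s\<in>?C. finite (XS M s)" using fs XSs finite_subset by blast
    show "\<forall>s\<in>?C. \<forall>s'\<in>?C. s \<noteq> s' \<longrightarrow> XS M s \<inter> XS M s' = {}" using disj by blast
  qed
  have UXg: "(\<Union>s\<in>?C. XS M s) \<subseteq> ground c" using XSs Cg by blast
  have sumX3: "(\<Sum>s\<in>?C. card (XS M s)) \<le> 3 * c"
    using sumX card_mono[OF fg UXg] cg by simp
  have sfg: "(\<Sum>s\<in>?C. 3 * card (Ms M s)) \<le> (\<Sum>s\<in>?C. 6 + 2 * card (XS M s))"
    by (rule sum_mono) (use gad in blast)
  have sg: "(\<Sum>s\<in>?C. 6 + 2 * card (XS M s)) = 6 * card ?C + 2 * (\<Sum>s\<in>?C. card (XS M s))"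
    by (simp add: sum.distrib sum_distrib_left)
  have sf: "(\<Sum>s\<in>?C. 3 * card (Ms M s)) = 3 * (\<Sum>s\<in>?C. card (Ms M s))"
    by (simp add: sum_distrib_left)
  have eqs: "(\<Sum>s\<in>?C. 3 * card (Ms M s)) = (\<Sum>s\<in>?C. 6 + 2 * card (XS M s))"
    and sX: "(\<Sum>s\<in>?C. card (XS M s)) = 3 * c" and Mp1: "card ?Mp = 1"
    using cM1 cMp sfg sg sf sumX3 size by linarith+
  have termwise: "\<And>s. s \<in> ?C \<Longrightarrow> 3 * card (Ms M s) = 6 + 2 * card (XS M s)"
  proof (rule ccontr)
    fix s assume s: "s \<in> ?C" and ne: "3 * card (Ms M s) \<noteq> 6 + 2 * card (XS M s)"
    have "(\<Sum>s\<in>?C. 3 * card (Ms M s)) < (\<Sum>s\<in>?C. 6 + 2 * card (XS M s))"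
    proof (rule sum_strict_mono_ex1[OF fC])
      show "\<forall>x\<in>?C. 3 * card (Ms M x) \<le> 6 + 2 * card (XS M x)" using gad by blast
      show "\<exists>a\<in>?C. 3 * card (Ms M a) < 6 + 2 * card (XS M a)" using gad[OF s] ne s by force
    qed
    with eqs show False by simp
  qed
  have UX: "(\<Union>s\<in>?C. XS M s) = ground c"
    by (rule card_subset_eq[OF fg UXg]) (use sumX sX cg in simp)
  obtain e where e: "e \<in> ?Mp" using Mp1 by (metis card.empty equals0I zero_neq_one)
  obtain q where q: "q \<in> {1..t}" "e = {Pv, Piv q}" using I_Pv[of e t S] e ME by blast
  define T where "T = {s\<in>?C. card (XS M s) = 3 \<and> (Uv s \<in> ?V \<or> Wv s \<in> ?V)}"
  have TXS: "\<And>s. s \<in> T \<Longrightarrow> XS M s = s"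
  proof -
    fix s assume "s \<in> T"
    hence "s \<in> ?C" "card (XS M s) = 3" by (auto simp: T_def)
    thus "XS M s = s" using card_subset_eq[OF fs XSs] Cg by metis
  qed
  have TS: "T \<subseteq> S q"
  proof
    fix s assume sT: "s \<in> T"
    show "s \<in> S q"
    proof (rule ccontr)
      assume nsq: "s \<notin> S q"
      have sC: "s \<in> ?C" and z0: "Uv s \<in> ?V \<or> Wv s \<in> ?V" using sT by (auto simp: T_def)
      have "card s = 3" using Cg sC by blast
      then obtain a b where ab: "a \<in> s" "b \<in> s" "a \<noteq> b"
        unfolding card_3_iff by blast
      have aV: "Iv s a \<in> ?V" and bV: "Iv s b \<in> ?V"
        using TXS[OF sT] ab unfolding XS_def by blast+
      have pV: "Piv q \<in> ?V" using e q by blast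
      obtain z where z: "z = Uv s \<or> z = Wv s" "z \<in> ?V" using z0 by blast
      have zE: "{Iv s a, z} \<in> ?E" "{z, Iv s b} \<in> ?E"
        using z(1) E_IU[OF sC ab(1)] E_IW[OF sC ab(1)] E_IU[OF sC ab(2)] E_IW[OF sC ab(2)]
        by (auto simp: insert_commute)
      have "has_cycle (induced_edges ?E ?V)"
      proof (rule cyc4[of "Piv q" "Iv s a" z "Iv s b"])
        show "distinct [Piv q, Iv s a, z, Iv s b]" using ab z(1) by auto
        show "{Piv q, Iv s a} \<in> induced_edges ?E ?V" using E_PI[OF q(1) sC nsq ab(1)] pV aV by (intro ind) auto
        show "{Iv s a, z} \<in> induced_edges ?E ?V" using zE aV z by (intro ind) auto
        show "{z, Iv s b} \<in> induced_edges ?E ?V" using zE bV z by (intro ind) auto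
        show "{Iv s b, Piv q} \<in> induced_edges ?E ?V" using E_PI[OF q(1) sC nsq ab(2)] pV bV
          by (intro ind) (auto simp: insert_commute)
      qed
      with nc show False by simp
    qed
  qed
  have "x3c_yes (ground c) (S q)"
    unfolding x3c_yes_def
  proof (intro exI[of _ T] conjI ballI)
    show "T \<subseteq> S q" by (rule TS)
    fix a assume "a \<in> ground c"
    then obtain s where s: "s \<in> ?C" "a \<in> XS M s" using UX by blast
    have "card (XS M s) \<noteq> 0" using s(2) fs[OF s(1)] XSs
      by (metis card_0_eq empty_iff finite_subset)
    hence sT: "s \<in> T" using gad[OF s(1)] termwise[OF s(1)] s(1) unfolding T_def by auto
    show "\<exists>!s. s \<in> T \<and> a \<in> s"
    proof (rule ex1I[of _ s])
      show "s \<in> T \<and> a \<in> s" using sT s(2) XSs by blast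
      fix s' assume "s' \<in> T \<and> a \<in> s'"
      hence "a \<in> XS M s'" using TXS by blast
      thus "s' = s" using disj s(2) by blast
    qed
  qed
  with q show ?thesis by blast
qed
end
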